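(* Let $q \geq 4$ be a power of $2$, and let $\mathcal{C} \subseteq (\mathbb{F}_{q^2})^{q^3}$ be the Hermitian-Lifted Code (defined in the context). Then the rate of $\mathcal{C}$, i.e. $\dim_{\mathbb{F}_{q^2}}(\mathcal{C})/q^3$, is at least $0.007$.
   Context: Let $q$ be a prime power. The Hermitian curve $\mathcal{H}_q$ is given by the affine equation $x^q + x = y^{q+1}$. Let $\mathcal{X} = \{(x,y) \in (\mathbb{F}_{q^2})^2 : x^q + x = y^{q+1}\}$ be its set of affine $\mathbb{F}_{q^2}$-rational points; $|\mathcal{X}| = q^3$. For $\alpha,\beta \in \mathbb{F}_{q^2}$, let $L_{\alpha,\beta}:\mathbb{F}_{q^2} \to (\mathbb{F}_{q^2})^2$, $L_{\alpha,\beta}(t) = (\alpha t + \beta, t)$, and let $\mathcal{L} = \{L_{\alpha,\beta} : \alpha,\beta \in \mathbb{F}_{q^2}\}$. For $f \in \mathbb{F}_{q^2}[x,y]$, $g \in \mathbb{F}_{q^2}[t]$ and $L \in \mathcal{L}$, say that $f\circ L$ agrees with $g$ on $\mathcal{X}$ if $f(L(t)) = g(t)$ for all $t \in \mathbb{F}_{q^2}$ with $L(t) \in \mathcal{X}$. Let $\mathcal{F}$ be the set of $f \in \mathbb{F}_{q^2}[x,y]$ such that for every $L \in \mathcal{L}$ there exists $g \in \mathbb{F}_{q^2}[t]$ with $\deg g \leq q-1$ such that $f \circ L$ agrees with $g$ on $\mathcal{X}$. The Hermitian-Lifted Code is $\mathcal{C} = \{ (f(P))_{P \in \mathcal{X}}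 : f \in \mathcal{F}\}$, a linear code of length $q^3$ over $\mathbb{F}_{q^2}$. *)

theory Defs
  imports "HOL-Computational_Algebra.Polynomial" "HOL-Library.Function_Algebras"
begin

text \<open>Bivariate polynomials over a field, represented by their coefficient function
  (finitely supported): the coefficient of the monomial x^i y^j is c (i,j).\<close>

definition bipoly_coeffs :: "(nat \<times> nat \<Rightarrow> 'a::field) set" where
  "bipoly_coeffs = {c. finite {m. c m \<noteq> 0}}"

definition bipoly_eval :: "(nat \<times> nat \<Rightarrow> 'a::field) \<Rightarrow> 'a \<Rightarrow> 'a \<Rightarrow> 'a" where
  "bipoly_eval c x y = (\<Sum>m\<in>{m. c m \<noteq> 0}. c m * x ^ fst m * y ^ snd m)"

text \<open>Affine rational points of the Hermitian curve x^q + x = y^(q+1) over the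
  field 'a (intended to be of order q^2).\<close>

definition herm_points :: "nat \<Rightarrow> ('a::field \<times> 'a) set" where
  "herm_points q = {(x, y). x ^ q + x = y ^ (q + 1)}"

definition herm_lifted_polys :: "nat \<Rightarrow> (nat \<times> nat \<Rightarrow> 'a::field) set" where
  "herm_lifted_polys q = {c \<in> bipoly_coeffs. \<forall>\<alpha> \<beta>. \<exists>g :: 'a poly. degree g \<le> q - 1 \<and>
      (\<forall>t. (\<alpha> * t + \<beta>, t) \<in> herm_points q \<longrightarrow> bipoly_eval c (\<alpha> * t + \<beta>) t = poly g t)}"

text \<open>The Hermitian-lifted code: codewords (f(P))_{P in X} are represented as functions on
  'a \<times> 'a that vanish outside X = herm_points q.\<close>

definition herm_lifted_code :: "nat \<Rightarrow> ('a::field \<times> 'a \<Rightarrow> 'a) set" where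
  "herm_lifted_code q = (\<lambda>c. \<lambda>P. if P \<in> herm_points q then bipoly_eval c (fst P) (snd P) else 0)
      ` herm_lifted_polys q"

definition fun_dim :: "('b \<Rightarrow> 'a::field) set \<Rightarrow> nat" where
  "fun_dim V = vector_space.dim (\<lambda>a f. \<lambda>x. a * f x) V"

end

theory Submission
  imports Defs
begin


lemma ff_fermat:
  fixes x :: "'a::{finite,field}"
  assumes "x \<noteq> 0"
  shows "x ^ (card (UNIV::'a set) - 1) = 1"
proof -
  let ?N = "UNIV - {0::'a}"
  have bij: "bij_betw (\<lambda>y. x * y) ?N ?N"
  proof -
    have "y \<in> (\<lambda>y. x * y) ` ?N" if "y \<in> ?N" for y
      using that assms by (intro image_eqI[of _ _ "inverse x * y"]) auto
    then show ?thesis unfolding bij_betw_def inj_on_def using assms by auto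
  qed
  have "(\<Prod>y\<in>?N. x * y) = (\<Prod>y\<in>?N. y)"
    using prod.reindex_bij_betw[OF bij, of "\<lambda>y. y"] by simp
  moreover have "(\<Prod>y\<in>?N. x * y) = x ^ card ?N * (\<Prod>y\<in>?N. y)"
    by (simp add: prod.distrib)
  moreover have "(\<Prod>y\<in>?N. y) \<noteq> 0" by simp
  moreover have "card ?N = card (UNIV::'a set) - 1"
    by (simp add: card_Diff_singleton)
  ultimately show ?thesis by simp
qed

lemma ff_pow_card:
  fixes x :: "'a::{finite,field}"
  shows "x ^ card (UNIV::'a set) = x"
proof (cases "x = 0")
  case True
  have "card (UNIV::'a set) > 0" by (simp add: finite_UNIV_card_ge_0)
  then show ?thesis using True by (simp add: power_0_left)
next
  case False
  have "card (UNIV::'a set) > 0" by (simp add: finite_UNIV_card_ge_0)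
  then have "x ^ card (UNIV::'a set) = x ^ (card (UNIV::'a set) - 1) * x"
    by (metis Suc_diff_1 power_Suc2)
  then show ?thesis using ff_fermat[OF False] by simp
qed

lemma ff_char2:
  assumes "card (UNIV::'a::{finite,field} set) = q ^ 2" and "even q" and "q > 0"
  shows "(2::'a) = 0"
proof -
  have "(-1::'a) ^ (card (UNIV::'a set) - 1) = 1" by (rule ff_fermat) simp
  moreover have "odd (card (UNIV::'a set) - 1)" using assms by auto
  ultimately have "(-1::'a) = 1" by simp
  then show ?thesis by (metis add_eq_0_iff one_add_one)
qed

lemma char2_sq:
  fixes x y :: "'a::comm_ring_1"
  assumes "(2::'a) = 0"
  shows "(x + y)^2 = x^2 + y^2"
  by (simp add: power2_sum assms)

lemma char2_frob:
  fixes x y :: "'a::comm_ring_1"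
  assumes "(2::'a) = 0"
  shows "(x + y)^(2^m) = x^(2^m) + y^(2^m)"
proof (induction m)
  case 0 then show ?case by simp
next
  case (Suc m)
  have "(x + y)^(2^Suc m) = ((x+y)^(2^m))^2" by (simp add: power_mult[symmetric] mult.commute)
  also have "\<dots> = (x^(2^m))^2 + (y^(2^m))^2" using Suc char2_sq[OF assms] by simp
  also have "\<dots> = x^(2^Suc m) + y^(2^Suc m)" by (simp add: power_mult[symmetric] mult.commute)
  finally show ?case .
qed

lemma char2_sum_sq:
  fixes f :: "'b \<Rightarrow> 'a::comm_ring_1"
  assumes "(2::'a) = 0"
  shows "(\<Sum>i\<in>A. f i)^2 = (\<Sum>i\<in>A. (f i)^2)"
proof (cases "finite A")
  case True then show ?thesis
    by (induction A rule: finite_induct) (auto simp: char2_sq[OF assms])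
qed simp

lemma char2_neg:
  fixes x :: "'a::comm_ring_1"
  assumes "(2::'a) = 0"
  shows "x + x = 0"
  by (metis assms mult_2 mult_zero_left)

lemma sum_fun_apply: "(\<Sum>v\<in>A. g v) x = (\<Sum>v\<in>A. g v x)"
  by (induction A rule: infinite_finite_induct) auto

lemma vs: "vector_space (\<lambda>a (f::'b \<Rightarrow> 'a::field). \<lambda>x. a * f x)"
  by unfold_locales (simp_all add: fun_eq_iff algebra_simps)



lemma card_roots_xq:
  fixes w :: "'a::field"
  assumes "q \<ge> 2"
  shows "card {x::'a. x^q + w * x = 0} \<le> q"
proof -
  let ?p = "monom (1::'a) q + [:0, w:]"
  have dg: "degree ?p = q"
    using assms by (subst degree_add_eq_left) (auto simp: degree_monom_eq)
  then have "?p \<noteq> 0" using assms by auto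
  moreover have "{x::'a. x^q + w * x = 0} = {x. poly ?p x = 0}"
    by (auto simp: poly_monom algebra_simps)
  ultimately show ?thesis using card_poly_roots_bound[of ?p] dg by simp
qed

lemma fiber_card:
  fixes y :: "'a::{finite,field}"
  assumes two: "(2::'a) = 0"
    and frob: "\<And>x z::'a. (x + z)^q = x^q + z^q"
    and qq: "\<And>x::'a. x^(q*q) = x"
    and card: "card (UNIV::'a set) = q * q"
    and q2: "q \<ge> 2"
  shows "card {x::'a. x^q + x = y^(q+1)} = q"
proof -
  define T where "T x = x^q + x" for x :: 'a
  define K where "K = {x::'a. T x = 0}"
  define Fq where "Fq = {z::'a. z^q = z}"
  have cK: "card K \<le> q"
    using card_roots_xq[OF q2, of 1] by (simp add: K_def T_def)
  have "Fq = {z::'a. z^q + (-1) * z = 0}" by (auto simp: Fq_def)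
  then have cF: "card Fq \<le> q" using card_roots_xq[OF q2, of "-1"] by simp
  have Tadd: "T (x + z) = T x + T z" for x z
    by (simp add: T_def frob algebra_simps)
  have rng: "range T \<subseteq> Fq"
  proof
    fix w assume "w \<in> range T"
    then obtain x where "w = T x" by auto
    then have "w^q = x^(q*q) + x^q" by (simp add: T_def frob power_mult)
    then show "w \<in> Fq" using qq \<open>w = T x\<close> by (simp add: Fq_def T_def add.commute)
  qed
  have fib: "{x. T x = T x0} = (\<lambda>k. x0 + k) ` K" for x0
  proof
    show "{x. T x = T x0} \<subseteq> (\<lambda>k. x0 + k) ` K"
    proof
      fix x assume "x \<in> {x. T x = T x0}"
      then have "T (x + x0) = 0" using Tadd char2_neg[OF two] by simp
      moreover have "x = x0 + (x + x0)" using char2_neg[OF two, of x0] by (simp add: algebra_simps)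
      ultimately show "x \<in> (\<lambda>k. x0 + k) ` K" unfolding K_def by blast
    qed
  next
    show "(\<lambda>k. x0 + k) ` K \<subseteq> {x. T x = T x0}" using Tadd by (auto simp: K_def)
  qed
  have fibc: "card {x. T x = w} = card K" if w: "w \<in> range T" for w
  proof -
    obtain x0 where "w = T x0" using w by auto
    then show ?thesis using fib[of x0] by (simp add: card_image)
  qed
  have U: "UNIV = (\<Union>w\<in>range T. {x. T x = w})" by auto
  have "card (\<Union>w\<in>range T. {x. T x = w}) = (\<Sum>w\<in>range T. card {x. T x = w})"
    by (rule card_UN_disjoint) auto
  then have "card (UNIV::'a set) = (\<Sum>w\<in>range T. card {x. T x = w})"
    using U by simp
  also have "\<dots> = card (range T) * card K" using fibc by simp
  finally have eq: "q * q = card (range T) * card K" using card by simp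
  have cR: "card (range T) \<le> q" using card_mono[OF _ rng] cF by (meson finite le_trans)
  have "card K = q"
  proof (rule ccontr)
    assume "card K \<noteq> q"
    then have "card K < q" using cK by simp
    then have "card (range T) * card K < q * q"
    proof -
      have "card (range T) * card K \<le> q * card K" using cR by (rule mult_le_mono1)
      also have "\<dots> < q * q" using \<open>card K < q\<close> q2 by simp
      finally show ?thesis .
    qed
    then show False using eq by simp
  qed
  then have "card (range T) = q" using eq q2 by simp
  then have "range T = Fq" using rng cF by (metis card_seteq finite)
  moreover have "y^(q+1) \<in> Fq"
  proof -
    have "(y^(q+1))^q = y^(q*q) * y^q"
      by (metis power_add power_mult add.commute mult.commute mult_1 distrib_left)
    then show ?thesis using qq by (simp add: Fq_def algebra_simps)
  qed
  ultimately have "y^(q+1) \<in> range T" by simp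
  then have "card {x. T x = y^(q+1)} = q" using fibc \<open>card K = q\<close> by simp
  then show ?thesis by (simp add: T_def)
qed



lemma poly_zero_many_roots:
  fixes P :: "'a::field poly"
  assumes "degree P < n" and "finite A" and "card A \<ge> n" and "\<And>x. x \<in> A \<Longrightarrow> poly P x = 0"
  shows "P = 0"
proof (rule ccontr)
  assume "P \<noteq> 0"
  have "card A \<le> card {x. poly P x = 0}"
    using assms \<open>P \<noteq> 0\<close> by (intro card_mono poly_roots_finite) auto
  also have "\<dots> \<le> degree P" using card_poly_roots_bound[OF \<open>P \<noteq> 0\<close>] .
  finally show False using assms by simp
qed

lemma mono_indep:
  fixes lam :: "nat \<times> nat \<Rightarrow> 'a::{finite,field}"
  assumes fibers: "\<And>y::'a. card {x::'a. x^q + x = y^(q+1)} = q"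
    and card: "card (UNIV::'a set) = q*q"
    and I: "I \<subseteq> {..<q} \<times> {..<q*q}"
    and z: "\<And>x y::'a. x^q + x = y^(q+1) \<Longrightarrow> (\<Sum>k\<in>I. lam k * x^(fst k) * y^(snd k)) = 0"
    and k: "k \<in> I"
  shows "lam k = 0"
proof -
  obtain a0 b0 where k0: "k = (a0, b0)" by (cases k)
  have fI: "finite I" using I by (rule finite_subset) auto
  have q0: "q > 0" using I k by auto
  have step1: "(\<Sum>k\<in>I. if fst k = a0 then lam k * y^(snd k) else 0) = 0" for y :: 'a
  proof -
    define P where "P = (\<Sum>k\<in>I. monom (lam k * y^(snd k)) (fst k))"
    have "degree P \<le> q - 1" unfolding P_def
    proof (rule degree_sum_le[OF fI])
    fix p assume "p \<in> I"
    then have "fst p < q" using I by auto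
    then show "degree (monom (lam p * y^(snd p)) (fst p)) \<le> q - 1"
      using degree_monom_le[of "lam p * y^(snd p)" "fst p"] by linarith
  qed
    then have dP: "degree P < q" using q0 by simp
    have "P = 0"
    proof (rule poly_zero_many_roots[OF dP, of "{x::'a. x^q + x = y^(q+1)}"])
      show "card {x::'a. x^q + x = y^(q+1)} \<ge> q" using fibers by simp
      fix x :: 'a assume "x \<in> {x. x^q + x = y^(q+1)}"
      then have "(\<Sum>k\<in>I. lam k * x^(fst k) * y^(snd k)) = 0" using z by simp
      then show "poly P x = 0" unfolding P_def poly_sum
        by (simp add: poly_monom algebra_simps)
    qed simp
    then have "coeff P a0 = 0" by simp
    then show ?thesis unfolding P_def coeff_sum by (simp add: coeff_monom if_distrib cong: if_cong)
  qed
  define Q where "Q = (\<Sum>k\<in>I. monom (if fst k = a0 then lam k else 0) (snd k))"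
  have "degree Q \<le> q*q - 1" unfolding Q_def
  proof (rule degree_sum_le[OF fI])
    fix p assume "p \<in> I"
    then have "snd p < q*q" using I by auto
    then show "degree (monom (if fst p = a0 then lam p else 0) (snd p)) \<le> q*q - 1"
      using degree_monom_le[of "if fst p = a0 then lam p else 0" "snd p"] by linarith
  qed
  moreover have "q * q > 0" using q0 by simp
  ultimately have dQ: "degree Q < q*q" by linarith
  have "Q = 0"
  proof (rule poly_zero_many_roots[OF dQ, of UNIV])
    fix y :: 'a
    have "(\<lambda>k. poly (monom (if fst k = a0 then lam k else 0) (snd k)) y)
        = (\<lambda>k. if fst k = a0 then lam k * y^(snd k) else 0)"
      by (auto simp: poly_monom fun_eq_iff)
    then show "poly Q y = 0" using step1[of y] unfolding Q_def poly_sum by (simp only:)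
  qed (use card in auto)
  then have "coeff Q b0 = 0" by simp
  moreover have "(\<lambda>k. coeff (monom (if fst k = a0 then lam k else 0) (snd k)) b0)
        = (\<lambda>k. if k = (a0,b0) then lam k else 0)"
    by (auto simp: coeff_monom fun_eq_iff)
  ultimately have "(\<Sum>k\<in>I. if k = (a0,b0) then lam k else 0) = 0"
    unfolding Q_def coeff_sum by (simp only:)
  then show ?thesis using k k0 fI by (simp add: sum.delta)
qed



lemma lifted_mono:
  fixes \<alpha> \<beta> :: "'a::field"
  assumes two: "(2::'a) = 0"
    and frob: "\<And>x z::'a. (x + z)^q = x^q + z^q"
    and qq: "\<And>x::'a. x^(q*q) = x"
    and i: "4*i < q" and j0: "4*j0 < q" and j1: "2*j1 < q"
  shows "\<exists>g::'a poly. degree g \<le> q - 1 \<and> (\<forall>t. (\<alpha>*t+\<beta>, t) \<in> herm_points q \<longrightarrow>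
            (\<alpha>*t+\<beta>)^(2*i) * t^(2*j0 + q*(2*j1)) = poly g t)"
proof -
  define a where "a = \<alpha>^q"
  define c where "c = \<alpha>*a + \<beta>^q + \<beta>"
  define \<gamma> where "\<gamma> = \<alpha>*a + \<beta>"
  have neg: "x + x = 0" for x :: 'a by (rule char2_neg[OF two])
  have aq: "a^q = \<alpha>" using qq[of \<alpha>] by (simp add: a_def power_mult)
  have onS: "(t + a)^(q+1) = c" if S: "(\<alpha>*t+\<beta>, t) \<in> herm_points q" for t
  proof -
    have h: "(\<alpha>*t+\<beta>)^q + (\<alpha>*t+\<beta>) = t^(q+1)" using S by (simp add: herm_points_def)
    have "(\<alpha>*t+\<beta>)^q = a * t^q + \<beta>^q" by (simp add: frob power_mult_distrib a_def)
    with h have h2: "t^q * t = a * t^q + \<beta>^q + \<alpha>*t + \<beta>" by (simp add: algebra_simps)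
    have "(t + a)^(q+1) = (t^q + \<alpha>) * (t + a)" by (simp add: frob aq)
    also have "\<dots> = t^q * t + a*t^q + \<alpha>*t + \<alpha>*a" by (simp add: algebra_simps)
    also have "\<dots> = (a*t^q + a*t^q) + (\<alpha>*t + \<alpha>*t) + c" unfolding h2 c_def by (simp add: algebra_simps)
    also have "\<dots> = c" by (simp add: neg)
    finally show ?thesis .
  qed
  show ?thesis
  proof (cases "c = 0")
    case True
    show ?thesis
    proof (intro exI[of _ "[: (\<alpha>*a+\<beta>)^(2*i) * a^(2*j0 + q*(2*j1)) :]"] conjI allI impI)
      fix t assume S: "(\<alpha>*t+\<beta>, t) \<in> herm_points q"
      then have "(t + a)^(q+1) = 0" using onS True by simp
      then have "t + a = 0" by auto
      then have "t = a" by (metis add_diff_cancel_right' diff_add_cancel neg add.commute add_0)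
      then show "(\<alpha>*t+\<beta>)^(2*i) * t^(2*j0 + q*(2*j1)) = poly [: (\<alpha>*a+\<beta>)^(2*i) * a^(2*j0 + q*(2*j1)) :] t"
        by simp
    qed simp
  next
    case False
    define R where "R = [:\<gamma>,\<alpha>:]^i * [:a,1:]^j0 * [:c,\<alpha>:]^j1"
    define h where "h e = (if j1 \<le> e then [:a,1:]^(2*(e-j1))
                           else smult (inverse c) ([:a,1:]^(q+1-2*(j1-e))))" for e
    define g where "g = (\<Sum>e\<le>degree R. smult ((coeff R e)^2) (h e))"
    have lin: "degree [:x, y:] \<le> 1" for x y :: 'a by simp
    have dp: "degree ([:x,y:]^n) \<le> n" for x y :: 'a and n
    proof -
      have "degree ([:x,y:]^n) \<le> degree [:x,y:] * n" by (rule degree_power_le)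
      also have "\<dots> \<le> 1 * n" using lin by (rule mult_le_mono1)
      finally show ?thesis by simp
    qed
    have degR: "degree R \<le> i + j0 + j1"
    proof -
      have "degree R \<le> degree ([:\<gamma>,\<alpha>:]^i * [:a,1:]^j0) + degree ([:c,\<alpha>:]^j1)"
        unfolding R_def by (rule degree_mult_le)
      also have "\<dots> \<le> degree ([:\<gamma>,\<alpha>:]^i) + degree ([:a,1:]^j0) + degree ([:c,\<alpha>:]^j1)"
        using degree_mult_le by simp
      also have "\<dots> \<le> i + j0 + j1"
        using dp[of \<gamma> \<alpha> i] dp[of c \<alpha> j1] by (simp add: degree_linear_power)
      finally show ?thesis .
    qed
    have degh: "degree (h e) \<le> q - 1" if "e \<le> degree R" for e
    proof (cases "j1 \<le> e")
      case True
      then have "degree (h e) = 2*(e-j1)" by (simp add: h_def degree_linear_power)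
      also have "\<dots> \<le> q - 1" using degR that i j0 by linarith
      finally show ?thesis .
    next
      case False
      then have "degree (h e) \<le> q+1-2*(j1-e)"
        using degree_smult_le[of "inverse c" "[:a,1:]^(q+1-2*(j1-e))"] by (simp add: h_def degree_linear_power)
      also have "\<dots> \<le> q - 1" using False j1 by linarith
      finally show ?thesis .
    qed
    have degg: "degree g \<le> q - 1" unfolding g_def
    proof (rule degree_sum_le)
      fix e assume "e \<in> {..degree R}"
      then show "degree (smult ((coeff R e)^2) (h e)) \<le> q - 1"
        using degh[of e] degree_smult_le[of "(coeff R e)^2" "h e"] by simp
    qed simp
    show ?thesis
    proof (intro exI[of _ g] conjI allI impI degg)
      fix t assume S: "(\<alpha>*t+\<beta>, t) \<in> herm_points q"
      define u where "u = t + a"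
      have uc: "u^(q+1) = c" using onS[OF S] by (simp add: u_def)
      then have u0: "u \<noteq> 0" using False by auto
      have tu: "t = u + a" by (simp add: u_def add.assoc neg)
      have lin1: "\<alpha>*t+\<beta> = \<gamma> + \<alpha>*u" by (simp add: tu \<gamma>_def algebra_simps)
      have tq: "t^q = u^q + \<alpha>" by (simp add: tu frob aq)
      have tqu: "t^q * u = c + \<alpha> * u" using uc by (simp add: tq algebra_simps)
      have pR: "poly R u = (\<gamma> + \<alpha>*u)^i * (a + u)^j0 * (c + \<alpha>*u)^j1"
        by (simp add: R_def poly_power algebra_simps)
      have F: "(\<alpha>*t+\<beta>)^(2*i) * t^(2*j0 + q*(2*j1)) * u^(2*j1) = (poly R u)^2"
      proof -
        have e1: "t^(2*j0 + q*(2*j1)) = t^(2*j0) * (t^q)^(2*j1)" by (simp add: power_add power_mult)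
        have e2: "(t^q)^(2*j1) * u^(2*j1) = (c + \<alpha>*u)^(2*j1)" by (simp add: tqu[symmetric] power_mult_distrib)
        have "(\<alpha>*t+\<beta>)^(2*i) * t^(2*j0 + q*(2*j1)) * u^(2*j1)
              = (\<gamma> + \<alpha>*u)^(2*i) * t^(2*j0) * ((t^q)^(2*j1) * u^(2*j1))"
          unfolding e1 lin1 by (simp only: mult.assoc)
        also have "\<dots> = (\<gamma> + \<alpha>*u)^(2*i) * t^(2*j0) * (c + \<alpha>*u)^(2*j1)"
          by (simp only: e2)
        also have "\<dots> = (\<gamma> + \<alpha>*u)^(2*i) * (a + u)^(2*j0) * (c + \<alpha>*u)^(2*j1)"
          by (subst tu) (simp add: add.commute)
        also have "\<dots> = ((\<gamma> + \<alpha>*u)^i * (a + u)^j0 * (c + \<alpha>*u)^j1)^2"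
          by (simp add: power_mult_distrib power_mult[symmetric] mult.commute)
        finally show ?thesis by (simp add: pR)
      qed
      have sq: "(poly R u)^2 = (\<Sum>e\<le>degree R. (coeff R e)^2 * u^(2*e))"
        unfolding poly_altdef char2_sum_sq[OF two] by (simp add: power_mult_distrib power_mult mult.commute)
      have ph: "poly (h e) t = u^(2*e) / u^(2*j1)" for e
      proof (cases "j1 \<le> e")
        case True
        have "2*e = 2*(e-j1) + 2*j1" using True by simp
        then have "u^(2*e) = u^(2*(e-j1)) * u^(2*j1)" by (metis power_add)
        then show ?thesis using True u0 by (simp add: h_def poly_power u_def add.commute)
      next
        case False
        have "q+1-2*(j1-e) + 2*j1 = (q+1) + 2*e" using False j1 by simp
        then have "u^(q+1-2*(j1-e)) * u^(2*j1) = u^(q+1) * u^(2*e)"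
          by (metis power_add)
        then have "u^(q+1-2*(j1-e)) * u^(2*j1) = c * u^(2*e)" using uc by simp
        then show ?thesis using False u0 \<open>c \<noteq> 0\<close>
          by (simp add: h_def poly_power u_def add.commute field_simps)
      qed
      have "poly g t = (\<Sum>e\<le>degree R. (coeff R e)^2 * (u^(2*e) / u^(2*j1)))"
        by (simp add: g_def poly_sum ph)
      also have "\<dots> = (poly R u)^2 / u^(2*j1)"
        by (simp add: sq sum_divide_distrib)
      also have "\<dots> = (\<alpha>*t+\<beta>)^(2*i) * t^(2*j0 + q*(2*j1))"
        using F u0 by (simp add: field_simps)
      finally show "(\<alpha>*t+\<beta>)^(2*i) * t^(2*j0 + q*(2*j1)) = poly g t" by simp
    qed
  qed
qed



definition mono_c :: "nat \<Rightarrow> nat \<Rightarrow> nat \<times> nat \<Rightarrow> 'a::field" where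
  "mono_c a b = (\<lambda>m. if m = (a,b) then 1 else 0)"

lemma mono_c_eval: "bipoly_eval (mono_c a b) x y = x^a * y^b"
proof -
  have "{m. mono_c a b m \<noteq> (0::'a)} = {(a,b)}" by (auto simp: mono_c_def)
  then show ?thesis by (simp add: bipoly_eval_def mono_c_def)
qed

lemma mono_c_coeffs: "mono_c a b \<in> bipoly_coeffs"
proof -
  have "{m. mono_c a b m \<noteq> (0::'a)} = {(a,b)}" by (auto simp: mono_c_def)
  then show ?thesis by (simp add: bipoly_coeffs_def)
qed

theorem mainTheorem1:
  fixes q m :: nat
  assumes "q = 2 ^ m" and "q \<ge> 4"
    and "card (UNIV :: 'a::{finite,field} set) = q ^ 2"
  shows "real (fun_dim (herm_lifted_code q :: ('a \<times> 'a \<Rightarrow> 'a) set)) / real (q ^ 3) \<ge> 0.007"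
proof -
  have m2: "m \<ge> 2"
  proof (rule ccontr)
    assume "\<not> m \<ge> 2"
    then have "m = 0 \<or> m = 1" by auto
    then show False using assms(1,2) by auto
  qed
  define k :: nat where "k = 2^(m-2)"
  have qk: "q = 4*k" using m2 assms(1) unfolding k_def
    by (metis le_add_diff_inverse power_add power2_eq_square numeral_Bit0 mult_2 numeral_2_eq_2)
  have k1: "k \<ge> 1" by (simp add: k_def)
  have card: "card (UNIV::'a set) = q*q" using assms(3) by (simp add: power2_eq_square)
  have two: "(2::'a) = 0" using ff_char2[OF assms(3)] qk k1 by simp
  have qq: "x^(q*q) = x" for x :: 'a using ff_pow_card[of x] card by simp
  have frob: "(x + z)^q = x^q + z^q" for x z :: 'a using char2_frob[OF two] assms(1) by simp
  have fibers: "card {x::'a. x^q + x = y^(q+1)} = q" for y :: 'a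
    by (rule fiber_card[OF two frob qq card]) (use qk k1 in simp)
  define S3 where "S3 = {..<k} \<times> {..<k} \<times> {..<2*k}"
  define expo where "expo = (\<lambda>(i::nat, j0::nat, j1::nat). (2*i, 2*j0 + q*(2*j1)))"
  define I where "I = expo ` S3"
  have inj: "inj_on expo S3"
  proof (rule inj_onI)
    fix x y assume x: "x \<in> S3" and y: "y \<in> S3" and e: "expo x = expo y"
    obtain i j0 j1 where xx: "x = (i,j0,j1)" by (cases x) auto
    obtain i' j0' j1' where yy: "y = (i',j0',j1')" by (cases y) auto
    have "2*j0 < q" "2*j0' < q" using x y qk by (auto simp: S3_def xx yy)
    have e1: "i = i'" and e2: "2*j0 + q*(2*j1) = 2*j0' + q*(2*j1')" using e by (auto simp: expo_def xx yy)
    have "(2*j0 + q*(2*j1)) mod q = 2*j0" using \<open>2*j0 < q\<close> by simp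
    moreover have "(2*j0' + q*(2*j1')) mod q = 2*j0'" using \<open>2*j0' < q\<close> by simp
    ultimately have "j0 = j0'" using e2 by simp
    then have "j1 = j1'" using e2 qk k1 by simp
    then show "x = y" using e1 \<open>j0 = j0'\<close> xx yy by simp
  qed
  have Isub: "I \<subseteq> {..<q} \<times> {..<q*q}"
  proof
    fix p assume "p \<in> I"
    then obtain i j0 j1 where p: "p = (2*i, 2*j0 + q*(2*j1))" and s: "i < k" "j0 < k" "j1 < 2*k"
      by (auto simp: I_def S3_def expo_def)
    have "2*j0 + q*(2*j1) < q + q*(2*j1)" using s qk by simp
    also have "\<dots> = q * (2*j1 + 1)" by simp
    also have "\<dots> \<le> q * q" using s qk by (intro mult_le_mono2) simp
    finally show "p \<in> {..<q} \<times> {..<q*q}" using p s qk by simp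
  qed
  have fI: "finite I" by (simp add: I_def S3_def)
  define \<phi> where "\<phi> = (\<lambda>(a::nat,b::nat). (\<lambda>P::'a\<times>'a. if P \<in> herm_points q then fst P ^ a * snd P ^ b else 0))"
  have \<phi>_app: "\<phi> (a,b) (x,y) = x^a * y^b" if "x^q + x = y^(q+1)" for a b x y
    using that by (simp add: \<phi>_def herm_points_def)
  have inX: "(x,y) \<in> herm_points q \<longleftrightarrow> x^q + x = y^(q+1)" for x y :: 'a
    by (simp add: herm_points_def)
  have in_code: "\<phi> p \<in> herm_lifted_code q" if pI: "p \<in> I" for p
  proof -
    obtain i j0 j1 where p: "p = (2*i, 2*j0 + q*(2*j1))" and s: "i < k" "j0 < k" "j1 < 2*k"
      using pI by (auto simp: I_def S3_def expo_def)
    let ?c = "mono_c (2*i) (2*j0 + q*(2*j1)) :: nat \<times> nat \<Rightarrow> 'a"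
    have "?c \<in> herm_lifted_polys q"
    proof -
      have "4*i < q" "4*j0 < q" "2*j1 < q" using s qk by auto
      note L = lifted_mono[OF two frob qq this]
      show ?thesis unfolding herm_lifted_polys_def
        using mono_c_coeffs L by (simp add: mono_c_eval)
    qed
    moreover have "\<phi> p = (\<lambda>P. if P \<in> herm_points q then bipoly_eval ?c (fst P) (snd P) else 0)"
      unfolding mono_c_eval by (simp add: p \<phi>_def)
    ultimately show ?thesis unfolding herm_lifted_code_def by blast
  qed
  have indep_sum: "lam p = 0"
    if z: "\<And>x y::'a. x^q + x = y^(q+1) \<Longrightarrow> (\<Sum>k\<in>I. lam k * \<phi> k (x,y)) = 0" and p: "p \<in> I" for lam p
  proof (rule mono_indep[OF fibers card Isub _ p])
    fix x y :: 'a assume h: "x^q + x = y^(q+1)"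
    have "(\<Sum>k\<in>I. lam k * x ^ fst k * y ^ snd k) = (\<Sum>k\<in>I. lam k * \<phi> k (x,y))"
      by (rule sum.cong) (auto simp: \<phi>_app[OF h] mult.assoc)
    then show "(\<Sum>k\<in>I. lam k * x ^ fst k * y ^ snd k) = 0" using z[OF h] by simp
  qed
  have injphi: "inj_on \<phi> I"
  proof (rule inj_onI, rule ccontr)
    fix k1 k2 assume k1: "k1 \<in> I" and k2: "k2 \<in> I" and e: "\<phi> k1 = \<phi> k2" and ne: "k1 \<noteq> k2"
    define lam :: "nat \<times> nat \<Rightarrow> 'a" where "lam k = (if k = k1 then 1 else if k = k2 then -1 else 0)" for k
    have "lam k1 = 0"
    proof (rule indep_sum[OF _ k1])
      fix x y :: 'a assume h: "x^q + x = y^(q+1)"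
      have "(\<Sum>k\<in>I. lam k * \<phi> k (x,y)) = (\<Sum>k\<in>I. (if k = k1 then \<phi> k1 (x,y) else 0) - (if k = k2 then \<phi> k2 (x,y) else 0))"
        by (rule sum.cong) (use ne in \<open>auto simp: lam_def\<close>)
      also have "\<dots> = \<phi> k1 (x,y) - \<phi> k2 (x,y)"
        using k1 k2 fI by (simp add: sum_subtractf sum.delta)
      finally show "(\<Sum>k\<in>I. lam k * \<phi> k (x,y)) = 0" using e by simp
    qed
    then show False by (simp add: lam_def)
  qed
  define B where "B = \<phi> ` I"
  have Bsub: "B \<subseteq> herm_lifted_code q" using in_code by (auto simp: B_def)
  have indB: "\<not> module.dependent (\<lambda>a (f::'a\<times>'a \<Rightarrow> 'a). \<lambda>x. a * f x) B"
  proof (rule vector_space.independent_if_scalars_zero[OF vs])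
    show "finite B" using fI by (simp add: B_def)
    fix f v assume s: "(\<Sum>x\<in>B. (\<lambda>P. f x * x P)) = 0" and v: "v \<in> B"
    obtain p where p: "p \<in> I" "v = \<phi> p" using v by (auto simp: B_def)
    have "f (\<phi> p) = 0"
    proof (rule indep_sum[of "\<lambda>k. f (\<phi> k)", OF _ p(1)])
      fix x y :: 'a assume h: "x^q + x = y^(q+1)"
      have "(\<Sum>x\<in>B. (\<lambda>P. f x * x P)) (x,y) = 0" using s by simp
      then have "(\<Sum>v\<in>B. f v * v (x,y)) = 0" by (simp add: sum_fun_apply)
      then show "(\<Sum>k\<in>I. f (\<phi> k) * \<phi> k (x,y)) = 0"
        unfolding B_def using sum.reindex[OF injphi, of "\<lambda>v. f v * v (x,y)"] by simp
    qed
    then show "f v = 0" using p by simp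
  qed
  have "card B \<le> fun_dim (herm_lifted_code q :: ('a \<times> 'a \<Rightarrow> 'a) set)"
  proof -
    obtain B' where B': "B \<subseteq> B'" "B' \<subseteq> herm_lifted_code q"
        "\<not> module.dependent (\<lambda>a (f::'a\<times>'a \<Rightarrow> 'a). \<lambda>x. a * f x) B'"
        "herm_lifted_code q \<subseteq> module.span (\<lambda>a (f::'a\<times>'a \<Rightarrow> 'a). \<lambda>x. a * f x) B'"
      using vector_space.maximal_independent_subset_extend[OF vs Bsub indB] by blast
    have "card B' = fun_dim (herm_lifted_code q :: ('a \<times> 'a \<Rightarrow> 'a) set)"
      unfolding fun_dim_def by (rule vector_space.basis_card_eq_dim[OF vs B'(2) B'(4) B'(3)])
    moreover have "card B \<le> card B'" using B'(1) by (rule card_mono[OF finite_subset[OF subset_UNIV finite_UNIV]])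
    ultimately show ?thesis by simp
  qed
  moreover have "card B = 2*k*k*k"
  proof -
    have "card B = card I" using injphi by (simp add: B_def card_image)
    also have "\<dots> = card S3" using inj by (simp add: I_def card_image)
    also have "\<dots> = 2*k*k*k" by (simp add: S3_def card_cartesian_product)
    finally show ?thesis .
  qed
  ultimately have D: "real (fun_dim (herm_lifted_code q :: ('a \<times> 'a \<Rightarrow> 'a) set)) \<ge> 2 * real k ^ 3"
    by (metis (mono_tags, lifting) of_nat_le_iff of_nat_mult of_nat_numeral power3_eq_cube mult.assoc)
  have Q: "real (q^3) = 64 * real k ^ 3" using qk by simp
  have kp: "real k > 0" using k1 by simp
  show ?thesis
    using D kp unfolding Q by (simp add: field_simps)
qed


end
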